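(* Let $\Omega\subset\mathbb{C}$ be a non-empty open set with connected components $\{A_i\}_{i\in I}$. Let $(X,\|\cdot\|)$ be a non-trivial Banach space of holomorphic functions on $\Omega$ such that: the constant function $1$ belongs to $X$; every point-evaluation functional is bounded (for each $z\in\Omega$ there is $C(z)>0$ with $|f(z)|\le C(z)\|f\|$ for all $f\in X$); and for every $g\in X$, each function $g\chi_{A_i}$ (equal to $g$ on $A_i$ and $0$ on $\Omega\setminus A_i$) belongs to $X$ and $\sum_{i\in I}\|g\chi_{A_i}\|<\infty$. Let $\phi$ be holomorphic on $\Omega$ such that $M_\phi f=\phi f$ defines a bounded operator $M_\phi:X\to X$. Then the following are equivalent: (1) $M_\phi$ is recurrent; (2) $M_\phi$ is rigid; (3) $\phi$ is constant on each $A_i$ and $|\phi(z)|=1$ for all $z\in\Omega$; (4) $M_\phi$ is hyper-recurrent; (5) $\mathrm{Hr}(M_\phi)$ is dense in $X$.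
   Context: For a bounded operator $T$ on a Banach space $X$: $x$ is recurrent if $T^{\omega_n}x\to x$ for some strictly increasing sequence $(\omega_n)$ of positive integers; $\mathrm{Rec}(T)$ is the set of recurrent vectors and $T$ is recurrent if $\mathrm{Rec}(T)$ is dense. $\mathfrak{C}$ is the set of strictly increasing sequences $\omega$ with $T^{\omega_n}x\to x$ for some $x\ne0$; $\mathfrak{L}(\omega)=\{x:T^{\omega_n}x\to x\}$. $T$ is rigid if $\mathfrak{L}(\omega)=X$ for some $\omega\in\mathfrak{C}$. $\mathrm{Hr}(T)$ is the set of $x\in\mathrm{Rec}(T)$ such that $\mathfrak{L}(\omega)$ is dense for every $\omega\in\mathfrak{C}$ with $x\in\mathfrak{L}(\omega)$; a recurrent $T$ is hyper-recurrent if $\mathrm{Hr}(T)\ne\emptyset$. *)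

theory Defs
  imports "HOL-Analysis.Analysis"
begin

text \<open>A Banach space of holomorphic functions on an open set Omega is modelled concretely as a
set X of functions complex to complex (each vanishing outside Omega, the canonical representative)
together with a norm N on X.\<close>

definition holo_banach_space ::
  "complex set \<Rightarrow> (complex \<Rightarrow> complex) set \<Rightarrow> ((complex \<Rightarrow> complex) \<Rightarrow> real) \<Rightarrow> bool" where
  "holo_banach_space \<Omega> X N \<longleftrightarrow>
     (\<forall>f\<in>X. f holomorphic_on \<Omega> \<and> (\<forall>z. z \<notin> \<Omega> \<longrightarrow> f z = 0)) \<and>
     (\<lambda>z. 0) \<in> X \<and>
     (\<forall>f\<in>X. \<forall>g\<in>X. (\<lambda>z. f z + g z) \<in> X) \<and>
     (\<forall>c. \<forall>f\<in>X. (\<lambda>z. c * f z) \<in> X) \<and>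
     (\<forall>f\<in>X. N f \<ge> 0 \<and> (N f = 0 \<longleftrightarrow> f = (\<lambda>z. 0))) \<and>
     (\<forall>f\<in>X. \<forall>g\<in>X. N (\<lambda>z. f z + g z) \<le> N f + N g) \<and>
     (\<forall>c. \<forall>f\<in>X. N (\<lambda>z. c * f z) = norm c * N f) \<and>
     (\<forall>s. (\<forall>n. s n \<in> X) \<longrightarrow>
        (\<forall>e>0. \<exists>M. \<forall>m\<ge>M. \<forall>n\<ge>M. N (\<lambda>z. s m z - s n z) < e) \<longrightarrow>
        (\<exists>f\<in>X. (\<lambda>n. N (\<lambda>z. s n z - f z)) \<longlonglongrightarrow> 0))"

definition nconv :: "((complex \<Rightarrow> complex) \<Rightarrow> real) \<Rightarrow> (nat \<Rightarrow> complex \<Rightarrow> complex) \<Rightarrow> (complex \<Rightarrow> complex) \<Rightarrow> bool" where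
  "nconv N s x \<longleftrightarrow> (\<lambda>n. N (\<lambda>z. s n z - x z)) \<longlonglongrightarrow> 0"

definition ndense :: "(complex \<Rightarrow> complex) set \<Rightarrow> ((complex \<Rightarrow> complex) \<Rightarrow> real) \<Rightarrow> (complex \<Rightarrow> complex) set \<Rightarrow> bool" where
  "ndense X N A \<longleftrightarrow> A \<subseteq> X \<and> (\<forall>x\<in>X. \<forall>e>0. \<exists>y\<in>A. N (\<lambda>z. x z - y z) < e)"

definition incseq_pos :: "(nat \<Rightarrow> nat) \<Rightarrow> bool" where
  "incseq_pos \<omega> \<longleftrightarrow> strict_mono \<omega> \<and> (\<forall>n. 0 < \<omega> n)"

type_synonym fn = "complex \<Rightarrow> complex"

definition Rec_set :: "fn set \<Rightarrow> (fn \<Rightarrow> real) \<Rightarrow> (fn \<Rightarrow> fn) \<Rightarrow> fn set" where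
  "Rec_set X N T = {x\<in>X. \<exists>\<omega>. incseq_pos \<omega> \<and> nconv N (\<lambda>n. (T ^^ \<omega> n) x) x}"

definition recurrent_op :: "fn set \<Rightarrow> (fn \<Rightarrow> real) \<Rightarrow> (fn \<Rightarrow> fn) \<Rightarrow> bool" where
  "recurrent_op X N T \<longleftrightarrow> ndense X N (Rec_set X N T)"

definition Lset :: "fn set \<Rightarrow> (fn \<Rightarrow> real) \<Rightarrow> (fn \<Rightarrow> fn) \<Rightarrow> (nat \<Rightarrow> nat) \<Rightarrow> fn set" where
  "Lset X N T \<omega> = {x\<in>X. nconv N (\<lambda>n. (T ^^ \<omega> n) x) x}"

definition Cset :: "fn set \<Rightarrow> (fn \<Rightarrow> real) \<Rightarrow> (fn \<Rightarrow> fn) \<Rightarrow> (nat \<Rightarrow> nat) set" where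
  "Cset X N T = {\<omega>. incseq_pos \<omega> \<and> (\<exists>x\<in>Lset X N T \<omega>. x \<noteq> (\<lambda>z. 0))}"

definition rigid_op :: "fn set \<Rightarrow> (fn \<Rightarrow> real) \<Rightarrow> (fn \<Rightarrow> fn) \<Rightarrow> bool" where
  "rigid_op X N T \<longleftrightarrow> (\<exists>\<omega>\<in>Cset X N T. Lset X N T \<omega> = X)"

definition Hr_set :: "fn set \<Rightarrow> (fn \<Rightarrow> real) \<Rightarrow> (fn \<Rightarrow> fn) \<Rightarrow> fn set" where
  "Hr_set X N T = {x\<in>Rec_set X N T. \<forall>\<omega>\<in>Cset X N T. x \<in> Lset X N T \<omega> \<longrightarrow> ndense X N (Lset X N T \<omega>)}"

definition hyper_recurrent_op :: "fn set \<Rightarrow> (fn \<Rightarrow> real) \<Rightarrow> (fn \<Rightarrow> fn) \<Rightarrow> bool" where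
  "hyper_recurrent_op X N T \<longleftrightarrow> recurrent_op X N T \<and> Hr_set X N T \<noteq> {}"

definition mult_op :: "fn \<Rightarrow> fn \<Rightarrow> fn" where
  "mult_op \<phi> f = (\<lambda>z. \<phi> z * f z)"

end

theory Submission
  imports Defs "HOL-Complex_Analysis.Conformal_Mappings"
begin


locale hb =
  fixes \<Omega> :: "complex set" and X :: "(complex \<Rightarrow> complex) set" and N :: "(complex \<Rightarrow> complex) \<Rightarrow> real"
  assumes HB: "holo_banach_space \<Omega> X N" and opn: "open \<Omega>"
  and pe: "\<forall>z\<in>\<Omega>. \<exists>C>0. \<forall>f\<in>X. norm (f z) \<le> C * N f"
  and dec: "\<forall>g\<in>X. (\<forall>A\<in>components \<Omega>. (\<lambda>z. if z \<in> A then g z else 0) \<in> X) \<and>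
                (\<lambda>A. N (\<lambda>z. if z \<in> A then g z else 0)) summable_on components \<Omega>"
begin

lemma X_holo: "f \<in> X \<Longrightarrow> f holomorphic_on \<Omega>" using HB unfolding holo_banach_space_def by blast
lemma X_out: "f \<in> X \<Longrightarrow> z \<notin> \<Omega> \<Longrightarrow> f z = 0" using HB unfolding holo_banach_space_def by blast
lemma X_zero: "(\<lambda>z. 0) \<in> X" using HB unfolding holo_banach_space_def by blast
lemma X_add: "f \<in> X \<Longrightarrow> g \<in> X \<Longrightarrow> (\<lambda>z. f z + g z) \<in> X" using HB unfolding holo_banach_space_def by blast
lemma X_scale: "f \<in> X \<Longrightarrow> (\<lambda>z. c * f z) \<in> X" using HB unfolding holo_banach_space_def by blast
lemma N_nonneg: "f \<in> X \<Longrightarrow> N f \<ge> 0" using HB unfolding holo_banach_space_def by blast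
lemma N_eq0: "f \<in> X \<Longrightarrow> N f = 0 \<longleftrightarrow> f = (\<lambda>z. 0)" using HB unfolding holo_banach_space_def by blast
lemma N_tri: "f \<in> X \<Longrightarrow> g \<in> X \<Longrightarrow> N (\<lambda>z. f z + g z) \<le> N f + N g" using HB unfolding holo_banach_space_def by blast
lemma N_scale: "f \<in> X \<Longrightarrow> N (\<lambda>z. c * f z) = norm c * N f" using HB unfolding holo_banach_space_def by blast
lemma complete: "(\<And>n. s n \<in> X) \<Longrightarrow> (\<forall>e>0. \<exists>M. \<forall>m\<ge>M. \<forall>n\<ge>M. N (\<lambda>z. s m z - s n z) < e) \<Longrightarrow>
        (\<exists>f\<in>X. (\<lambda>n. N (\<lambda>z. s n z - f z)) \<longlonglongrightarrow> 0)" using HB unfolding holo_banach_space_def by blast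

lemma N_zero: "N (\<lambda>z. 0) = 0" using N_eq0 X_zero by blast

lemma X_diff: "f \<in> X \<Longrightarrow> g \<in> X \<Longrightarrow> (\<lambda>z. f z - g z) \<in> X"
proof -
  assume f: "f \<in> X" and g: "g \<in> X"
  have "(\<lambda>z. f z + (\<lambda>z. (-1) * g z) z) \<in> X" using X_add[OF f X_scale[OF g]] .
  then show ?thesis by simp
qed

lemma X_sum: "finite F \<Longrightarrow> (\<And>A. A \<in> F \<Longrightarrow> u A \<in> X) \<Longrightarrow> (\<lambda>z. \<Sum>A\<in>F. u A z) \<in> X"
proof (induction F rule: finite_induct)
  case empty then show ?case using X_zero by simp
next
  case (insert a F)
  have "(\<lambda>z. u a z + (\<lambda>z. \<Sum>A\<in>F. u A z) z) \<in> X" using insert by (intro X_add) auto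
  then show ?case using insert by simp
qed

lemma N_sum: "finite F \<Longrightarrow> (\<And>A. A \<in> F \<Longrightarrow> u A \<in> X) \<Longrightarrow> N (\<lambda>z. \<Sum>A\<in>F. u A z) \<le> (\<Sum>A\<in>F. N (u A))"
proof (induction F rule: finite_induct)
  case empty then show ?case using N_zero by simp
next
  case (insert a F)
  have "N (\<lambda>z. u a z + (\<lambda>z. \<Sum>A\<in>F. u A z) z) \<le> N (u a) + N (\<lambda>z. \<Sum>A\<in>F. u A z)"
    using insert X_sum by (intro N_tri) auto
  then show ?case using insert by simp
qed

lemma N_commute: "f \<in> X \<Longrightarrow> g \<in> X \<Longrightarrow> N (\<lambda>z. f z - g z) = N (\<lambda>z. g z - f z)"
proof -
  assume f: "f \<in> X" and g: "g \<in> X"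
  have "N (\<lambda>z. (-1) * (\<lambda>z. f z - g z) z) = norm (-1::complex) * N (\<lambda>z. f z - g z)"
    using N_scale[OF X_diff[OF f g]] .
  then show ?thesis by simp
qed

lemma N_tri_diff: "f \<in> X \<Longrightarrow> g \<in> X \<Longrightarrow> h \<in> X \<Longrightarrow> N (\<lambda>z. f z - h z) \<le> N (\<lambda>z. f z - g z) + N (\<lambda>z. g z - h z)"
proof -
  assume f: "f \<in> X" and g: "g \<in> X" and h: "h \<in> X"
  have "N (\<lambda>z. (\<lambda>z. f z - g z) z + (\<lambda>z. g z - h z) z) \<le> N (\<lambda>z. f z - g z) + N (\<lambda>z. g z - h z)"
    using N_tri[OF X_diff[OF f g] X_diff[OF g h]] .
  then show ?thesis by simp
qed

lemma N_le_diff: "f \<in> X \<Longrightarrow> g \<in> X \<Longrightarrow> N f \<le> N g + N (\<lambda>z. f z - g z)"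
proof -
  assume f: "f \<in> X" and g: "g \<in> X"
  have "N (\<lambda>z. g z + (\<lambda>z. f z - g z) z) \<le> N g + N (\<lambda>z. f z - g z)"
    using N_tri[OF g X_diff[OF f g]] .
  then show ?thesis by simp
qed

lemma pe_conv:
  assumes s: "\<And>n. s n \<in> X" and f: "f \<in> X" and c: "nconv N s f" and z: "z \<in> \<Omega>"
  shows "(\<lambda>n. s n z) \<longlonglongrightarrow> f z"
proof -
  obtain C where C: "C > 0" "\<forall>f\<in>X. norm (f z) \<le> C * N f" using pe z by blast
  have "(\<lambda>n. C * N (\<lambda>z. s n z - f z)) \<longlonglongrightarrow> C * 0"
    using c unfolding nconv_def by (intro tendsto_mult) auto
  then have "(\<lambda>n. C * N (\<lambda>z. s n z - f z)) \<longlonglongrightarrow> 0" by simp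
  moreover have "norm (s n z - f z) \<le> C * N (\<lambda>z. s n z - f z)" for n
    using C(2) X_diff[OF s f] by fastforce
  ultimately have "(\<lambda>n. s n z - f z) \<longlonglongrightarrow> 0"
    using Lim_null_comparison[of "\<lambda>n. s n z - f z" "\<lambda>n. C * N (\<lambda>z. s n z - f z)" sequentially]
    by (simp add: always_eventually)
  then show ?thesis by (simp add: LIM_zero_iff)
qed

end


lemma infsum_dct:
  fixes a :: "nat \<Rightarrow> 'i \<Rightarrow> real"
  assumes b: "b summable_on I" and bd: "\<And>n i. i \<in> I \<Longrightarrow> 0 \<le> a n i \<and> a n i \<le> b i"
    and lim: "\<And>i. i \<in> I \<Longrightarrow> (\<lambda>n. a n i) \<longlonglongrightarrow> 0"
  shows "(\<lambda>n. infsum (a n) I) \<longlonglongrightarrow> 0"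
proof (rule LIMSEQ_I)
  fix e :: real assume e: "e > 0"
  obtain F where F: "finite F" "F \<subseteq> I" "dist (sum b F) (infsum b I) \<le> e/2"
    using infsum_finite_approximation[OF b, of "e/2"] e by auto
  have bsub: "b summable_on (I - F)" using summable_on_subset[OF b] by auto
  have "infsum b I = infsum b (F \<union> (I - F))" using F(2) by (simp add: Un_absorb1)
  also have "\<dots> = infsum b F + infsum b (I - F)"
    by (rule infsum_Un_disjoint) (use F(1) bsub in auto)
  finally have tail: "infsum b (I - F) \<le> e/2" using F by (simp add: dist_real_def)
  have lim0: "(\<lambda>n. \<Sum>i\<in>F. a n i) \<longlonglongrightarrow> 0" using lim F(2) by (intro tendsto_null_sum) auto
  obtain M where M: "\<And>n. n \<ge> M \<Longrightarrow> norm (\<Sum>i\<in>F. a n i) < e/2"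
    using LIMSEQ_D[OF lim0, of "e/2"] e by fastforce
  show "\<exists>no. \<forall>n\<ge>no. norm (infsum (a n) I - 0) < e"
  proof (intro exI allI impI)
    fix n assume n: "n \<ge> M"
    have asub: "a n summable_on (I - F)"
      by (rule summable_on_comparison_test[OF bsub]) (use bd in auto)
    have aI: "infsum (a n) I = infsum (a n) (F \<union> (I - F))" using F(2) by (simp add: Un_absorb1)
    also have "\<dots> = infsum (a n) F + infsum (a n) (I - F)"
      by (rule infsum_Un_disjoint) (use F(1) asub in auto)
    finally have eq: "infsum (a n) I = (\<Sum>i\<in>F. a n i) + infsum (a n) (I - F)" using F(1) by simp
    have "infsum (a n) (I - F) \<le> infsum b (I - F)"
      by (rule infsum_mono[OF asub bsub]) (use bd in auto)
    moreover have "infsum (a n) (I - F) \<ge> 0" by (rule infsum_nonneg) (use bd in auto)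
    moreover have "(\<Sum>i\<in>F. a n i) \<ge> 0" using bd F(2) by (intro sum_nonneg) auto
    ultimately show "norm (infsum (a n) I - 0) < e" using eq tail M[OF n] by auto
  qed
qed

abbreviation chi :: "complex set \<Rightarrow> (complex \<Rightarrow> complex) \<Rightarrow> complex \<Rightarrow> complex" where
  "chi A g \<equiv> (\<lambda>z. if z \<in> A then g z else 0)"

context hb
begin

lemma chi_X: "g \<in> X \<Longrightarrow> A \<in> components \<Omega> \<Longrightarrow> chi A g \<in> X" using dec by blast
lemma chi_summable: "g \<in> X \<Longrightarrow> (\<lambda>A. N (chi A g)) summable_on components \<Omega>" using dec by blast

lemma comp_unique: "A \<in> components \<Omega> \<Longrightarrow> B \<in> components \<Omega> \<Longrightarrow> z \<in> A \<Longrightarrow> z \<in> B \<Longrightarrow> A = B"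
  using components_nonoverlap by blast

lemma N_le_infsum:
  assumes h: "h \<in> X"
  shows "N h \<le> infsum (\<lambda>A. N (chi A h)) (components \<Omega>)"
proof -
  define C where "C = components \<Omega>"
  define w where "w A = N (chi A h)" for A
  define S where "S = infsum w C"
  have hs: "(w has_sum S) C" using chi_summable[OF h] unfolding w_def S_def C_def by simp
  have wnn: "A \<in> C \<Longrightarrow> w A \<ge> 0" for A unfolding w_def C_def using chi_X[OF h] N_nonneg by blast
  have "\<exists>F. finite F \<and> F \<subseteq> C \<and> (\<forall>Y. finite Y \<and> F \<subseteq> Y \<and> Y \<subseteq> C \<longrightarrow> \<bar>sum w Y - S\<bar> < inverse (real (Suc n)))" for n
  proof -
    have "(sum w \<longlongrightarrow> S) (finite_subsets_at_top C)" using hs unfolding has_sum_def .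
    then have "eventually (\<lambda>Y. dist (sum w Y) S < inverse (real (Suc n))) (finite_subsets_at_top C)"
      by (rule tendstoD) simp
    then show ?thesis unfolding eventually_finite_subsets_at_top dist_real_def by blast
  qed
  then obtain F where F: "\<And>n. finite (F n)" "\<And>n. F n \<subseteq> C"
     "\<And>n Y. finite Y \<Longrightarrow> F n \<subseteq> Y \<Longrightarrow> Y \<subseteq> C \<Longrightarrow> \<bar>sum w Y - S\<bar> < inverse (real (Suc n))"
    by metis
  define G where "G n = (\<Union>k\<le>n. F k)" for n
  have Gfin: "finite (G n)" for n unfolding G_def using F(1) by auto
  have GC: "G n \<subseteq> C" for n unfolding G_def using F(2) by auto
  have Gmono: "n \<le> m \<Longrightarrow> G n \<subseteq> G m" for n m unfolding G_def by (intro UN_mono) auto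
  have Gclose: "n \<le> m \<Longrightarrow> \<bar>sum w (G m) - S\<bar> < inverse (real (Suc n))" for n m
    by (rule F(3)[OF Gfin _ GC]) (use Gmono in \<open>auto simp: G_def\<close>)
  define s where "s n = (\<lambda>z. \<Sum>A\<in>G n. chi A h z)" for n
  have sX: "s n \<in> X" for n unfolding s_def using Gfin GC chi_X[OF h] C_def by (intro X_sum) auto
  have Ns: "N (s n) \<le> sum w (G n)" for n
    unfolding s_def w_def using Gfin GC chi_X[OF h] C_def by (intro N_sum) auto
  have cau1: "N (\<lambda>z. s m z - s n z) < 2 * inverse (real (Suc n))" if "n \<le> m" for n m
  proof -
    have eq: "(\<lambda>z. s m z - s n z) = (\<lambda>z. \<Sum>A\<in>G m - G n. chi A h z)"
    proof
      fix x
      have "(\<Sum>A\<in>G m. chi A h x) = (\<Sum>A\<in>G m - G n. chi A h x) + (\<Sum>A\<in>G n. chi A h x)"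
        by (rule sum.subset_diff[OF Gmono[OF that] Gfin])
      then show "s m x - s n x = (\<Sum>A\<in>G m - G n. chi A h x)" unfolding s_def by simp
    qed
    have "N (\<lambda>z. s m z - s n z) \<le> (\<Sum>A\<in>G m - G n. w A)"
      unfolding eq w_def using Gfin GC chi_X[OF h] C_def by (intro N_sum) auto
    also have "\<dots> = sum w (G m) - sum w (G n)"
      using sum.subset_diff[OF Gmono[OF that] Gfin, of w] by simp
    also have "\<dots> < 2 * inverse (real (Suc n))" using Gclose[OF that] Gclose[of n n] by linarith
    finally show ?thesis .
  qed
  have cau: "\<forall>e>0. \<exists>M. \<forall>m\<ge>M. \<forall>n\<ge>M. N (\<lambda>z. s m z - s n z) < e"
  proof (intro allI impI)
    fix e :: real assume e: "e > 0"
    obtain M where M: "inverse (real (Suc M)) < e/2" using reals_Archimedean[of "e/2"] e by auto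
    have "N (\<lambda>z. s m z - s n z) < e" if "m \<ge> M" "n \<ge> M" for m n
    proof (cases "n \<le> m")
      case True
      have "inverse (real (Suc n)) \<le> inverse (real (Suc M))" using that by (auto simp: field_simps)
      then show ?thesis using cau1[OF True] M by linarith
    next
      case False
      have "inverse (real (Suc m)) \<le> inverse (real (Suc M))" using that by (auto simp: field_simps)
      have "N (\<lambda>z. s m z - s n z) = N (\<lambda>z. s n z - s m z)" using N_commute[OF sX sX] .
      also have "\<dots> < 2 * inverse (real (Suc m))" using cau1[of m n] False by simp
      finally show ?thesis using M \<open>inverse (real (Suc m)) \<le> inverse (real (Suc M))\<close> by linarith
    qed
    then show "\<exists>M. \<forall>m\<ge>M. \<forall>n\<ge>M. N (\<lambda>z. s m z - s n z) < e" by blast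
  qed
  obtain f where f: "f \<in> X" "(\<lambda>n. N (\<lambda>z. s n z - f z)) \<longlonglongrightarrow> 0" using complete[OF sX cau] by blast
  have fh: "f = h"
  proof
    fix z show "f z = h z"
    proof (cases "z \<in> \<Omega>")
      case False then show ?thesis using X_out[OF f(1) False] X_out[OF h False] by simp
    next
      case True
      obtain A0 where A0: "A0 \<in> C" "z \<in> A0" using True Union_components[of \<Omega>] unfolding C_def by blast
      have sz: "s n z = (if A0 \<in> G n then h z else 0)" for n
      proof -
        have "s n z = (\<Sum>A\<in>G n. if A = A0 then h z else 0)"
          unfolding s_def
        proof (intro sum.cong refl)
          fix A assume "A \<in> G n"
          then have "A \<in> C" using GC by auto
          then have "z \<in> A \<longleftrightarrow> A = A0" using A0 comp_unique unfolding C_def by blast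
          then show "chi A h z = (if A = A0 then h z else 0)" by simp
        qed
        then show ?thesis using Gfin by simp
      qed
      have ev: "eventually (\<lambda>n. s n z = h z) sequentially"
      proof (cases "h z = 0")
        case True then show ?thesis using sz by simp
      next
        case False
        have ne: "chi A0 h \<noteq> (\<lambda>z. 0)"
        proof
          assume "chi A0 h = (\<lambda>z. 0)"
          from fun_cong[OF this, of z] A0 False show False by simp
        qed
        have cX: "chi A0 h \<in> X" using chi_X[OF h] A0 C_def by simp
        have wpos: "w A0 > 0" unfolding w_def using N_nonneg[OF cX] N_eq0[OF cX] ne by linarith
        obtain n0 where n0: "inverse (real (Suc n0)) < w A0 / 2" using reals_Archimedean[of "w A0/2"] wpos by auto
        have "A0 \<in> G m" if "m \<ge> n0" for m
        proof (rule ccontr)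
          assume nin: "A0 \<notin> G m"
          have "\<bar>sum w (insert A0 (G m)) - S\<bar> < inverse (real (Suc m))"
          proof (rule F(3))
            show "finite (insert A0 (G m))" using Gfin by simp
            show "insert A0 (G m) \<subseteq> C" using GC A0 by simp
            have "F m \<subseteq> G m" unfolding G_def by auto
            then show "F m \<subseteq> insert A0 (G m)" by blast
          qed
          moreover have "sum w (insert A0 (G m)) = w A0 + sum w (G m)" using nin Gfin by simp
          moreover have "\<bar>sum w (G m) - S\<bar> < inverse (real (Suc m))" using Gclose[of m m] by simp
          moreover have "inverse (real (Suc m)) \<le> inverse (real (Suc n0))" using that by (auto simp: field_simps)
          ultimately show False using n0 by linarith
        qed
        then show ?thesis using sz by (auto simp: eventually_sequentially)
      qed
      have l1: "(\<lambda>n. s n z) \<longlonglongrightarrow> h z" using ev by (rule tendsto_eventually)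
      have l2: "(\<lambda>n. s n z) \<longlonglongrightarrow> f z" using pe_conv[OF sX f(1) _ True] f(2) unfolding nconv_def by simp
      show ?thesis using LIMSEQ_unique[OF l2 l1] .
    qed
  qed
  have bnd: "N h - S \<le> inverse (real (Suc n)) + N (\<lambda>z. s n z - f z)" for n
  proof -
    have "N h \<le> N (s n) + N (\<lambda>z. h z - s n z)" using N_le_diff[OF h sX] .
    also have "N (\<lambda>z. h z - s n z) = N (\<lambda>z. s n z - f z)" using N_commute[OF h sX] fh by simp
    finally show ?thesis using Ns[of n] Gclose[of n n] by linarith
  qed
  have "(\<lambda>n. inverse (real (Suc n)) + N (\<lambda>z. s n z - f z)) \<longlonglongrightarrow> 0 + 0"
    using LIMSEQ_inverse_real_of_nat f(2) by (intro tendsto_add)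
  then have "N h - S \<le> 0" using bnd by (intro LIMSEQ_le_const[of _ 0]) auto
  then show ?thesis unfolding S_def w_def C_def by simp
qed

end


lemma subseq_all_conv:
  fixes c :: "'i \<Rightarrow> complex"
  assumes "finite F" "\<And>A. A \<in> F \<Longrightarrow> norm (c A) \<le> 1"
  shows "\<exists>r. strict_mono r \<and> (\<forall>A\<in>F. convergent (\<lambda>j. c A ^ r j))"
  using assms
proof (induction F rule: finite_induct)
  case empty
  show ?case by (intro exI[of _ id]) (auto simp: strict_mono_def)
next
  case (insert A F)
  have "\<And>B. B \<in> F \<Longrightarrow> norm (c B) \<le> 1" using insert(4) by simp
  then obtain r where r: "strict_mono r" "\<forall>B\<in>F. convergent (\<lambda>j. c B ^ r j)" using insert(3) by blast
  have "norm (c A ^ r j) \<le> 1" for j using insert(4)[of A] by (simp add: norm_power power_le_one)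
  then have "bounded (range (\<lambda>j. c A ^ r j))" unfolding bounded_iff by (intro exI[of _ 1]) auto
  from bounded_imp_convergent_subsequence[OF this] obtain l r' where r': "strict_mono r'" "((\<lambda>j. c A ^ r j) \<circ> r') \<longlonglongrightarrow> l"
    by blast
  have sm: "strict_mono (r \<circ> r')" using r(1) r'(1) by (rule strict_mono_o)
  have "(\<lambda>j. c A ^ (r \<circ> r') j) \<longlonglongrightarrow> l" using r'(2) by (simp add: o_def)
  then have cA: "convergent (\<lambda>j. c A ^ (r \<circ> r') j)" by (rule convergentI)
  have cB: "convergent (\<lambda>j. c B ^ (r \<circ> r') j)" if "B \<in> F" for B
  proof -
    have "convergent (\<lambda>j. c B ^ r j)" using r(2) that by blast
    then obtain L where "(\<lambda>j. c B ^ r j) \<longlonglongrightarrow> L" unfolding convergent_def by blast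
    from LIMSEQ_subseq_LIMSEQ[OF this r'(1)] have "(\<lambda>j. c B ^ (r \<circ> r') j) \<longlonglongrightarrow> L" by (simp add: o_def)
    then show ?thesis by (rule convergentI)
  qed
  have "\<forall>B\<in>insert A F. convergent (\<lambda>j. c B ^ (r \<circ> r') j)" using cA cB by blast
  then show ?case using sm by blast
qed

lemma fsr:
  fixes c :: "'i \<Rightarrow> complex"
  assumes F: "finite F" and c1: "\<And>A. A \<in> F \<Longrightarrow> norm (c A) = 1" and e: "e > 0"
  shows "\<exists>k>K. \<forall>A\<in>F. norm (c A ^ k - 1) < e"
proof -
  obtain r where r: "strict_mono r" "\<forall>A\<in>F. convergent (\<lambda>j. c A ^ r j)"
    using subseq_all_conv[OF F, of c] c1 by fastforce
  define L where "L A = lim (\<lambda>j. c A ^ r j)" for A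
  have lim: "(\<lambda>j. c A ^ r j) \<longlonglongrightarrow> L A" if "A \<in> F" for A
    using r(2) that unfolding L_def by (simp add: convergent_LIMSEQ_iff)
  have "eventually (\<lambda>j. \<forall>A\<in>F. dist (c A ^ r j) (L A) < e/2) sequentially"
  proof (intro eventually_ball_finite[OF F] ballI)
    fix A assume "A \<in> F"
    show "eventually (\<lambda>j. dist (c A ^ r j) (L A) < e/2) sequentially"
      using tendstoD[OF lim[OF \<open>A \<in> F\<close>], of "e/2"] e by simp
  qed
  then obtain J where J: "\<And>j A. j \<ge> J \<Longrightarrow> A \<in> F \<Longrightarrow> dist (c A ^ r j) (L A) < e/2"
    unfolding eventually_sequentially by blast
  define j2 where "j2 = r J + K + 1"
  have "r j2 \<ge> j2" using seq_suble[OF r(1)] by simp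
  have Jj2: "J \<le> j2" using seq_suble[OF r(1), of J] j2_def by linarith
  define k where "k = r j2 - r J"
  have kK: "k > K" unfolding k_def using \<open>r j2 \<ge> j2\<close> j2_def by linarith
  have rj2: "r j2 = k + r J" unfolding k_def using \<open>r j2 \<ge> j2\<close> j2_def by linarith
  have "norm (c A ^ k - 1) < e" if A: "A \<in> F" for A
  proof -
    have eqc: "(c A ^ k - 1) * c A ^ r J = c A ^ r j2 - c A ^ r J"
      unfolding rj2 power_add by (simp add: algebra_simps)
    have "norm (c A ^ k - 1) = norm (c A ^ k - 1) * norm (c A ^ r J)"
      using c1[OF A] by (simp add: norm_power)
    also have "\<dots> = norm ((c A ^ k - 1) * c A ^ r J)" by (rule norm_mult[symmetric])
    also have "\<dots> = norm (c A ^ r j2 - c A ^ r J)" by (simp only: eqc)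
    also have "\<dots> \<le> dist (c A ^ r j2) (L A) + dist (c A ^ r J) (L A)"
      using dist_triangle2[of "c A ^ r j2" "c A ^ r J" "L A"] by (simp add: dist_norm)
    also have "\<dots> < e/2 + e/2" using J[OF Jj2 A] J[OF le_refl A]
      by (intro add_strict_mono) auto
    finally show ?thesis by simp
  qed
  then show ?thesis using kK by blast
qed

primrec pickseq :: "(nat \<Rightarrow> nat \<Rightarrow> bool) \<Rightarrow> nat \<Rightarrow> nat" where
  "pickseq P 0 = (SOME k. k > 0 \<and> P 0 k)"
| "pickseq P (Suc n) = (SOME k. k > pickseq P n \<and> P (Suc n) k)"

lemma pickseq:
  assumes "\<And>n K. \<exists>k>K. P n k"
  shows "incseq_pos (pickseq P) \<and> (\<forall>n. P n (pickseq P n))"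
proof -
  have a: "P n (pickseq P n) \<and> 0 < pickseq P n" for n
  proof (cases n)
    case 0
    have "\<exists>k. k > 0 \<and> P 0 k" using assms[of 0 0] by blast
    from someI_ex[OF this] show ?thesis using 0 by simp
  next
    case (Suc m)
    have "\<exists>k. k > pickseq P m \<and> P (Suc m) k" using assms by blast
    from someI_ex[OF this] show ?thesis using Suc by simp
  qed
  have b: "pickseq P n < pickseq P (Suc n)" for n
  proof -
    have "\<exists>k. k > pickseq P n \<and> P (Suc n) k" using assms by blast
    from someI_ex[OF this] show ?thesis by simp
  qed
  show ?thesis using a b unfolding incseq_pos_def strict_mono_Suc_iff by blast
qed

lemma infsum_split_bound:
  fixes f :: "'i \<Rightarrow> real"
  assumes b: "b summable_on I" and bd: "\<And>i. i \<in> I \<Longrightarrow> 0 \<le> f i \<and> f i \<le> b i" and F: "finite F" "F \<subseteq> I"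
  shows "infsum f I \<le> sum f F + infsum b (I - F)" and "f summable_on I"
proof -
  have bsub: "b summable_on (I - F)" using summable_on_subset[OF b] by auto
  have asub: "f summable_on (I - F)"
    by (rule summable_on_comparison_test[OF bsub]) (use bd in auto)
  show "f summable_on I" by (rule summable_on_comparison_test[OF b]) (use bd in auto)
  have "infsum f I = infsum f (F \<union> (I - F))" using F(2) by (simp add: Un_absorb1)
  also have "\<dots> = infsum f F + infsum f (I - F)"
    by (rule infsum_Un_disjoint) (use F(1) asub in auto)
  finally have eq: "infsum f I = sum f F + infsum f (I - F)" using F(1) by simp
  have "infsum f (I - F) \<le> infsum b (I - F)"
    by (rule infsum_mono[OF asub bsub]) (use bd in auto)
  then show "infsum f I \<le> sum f F + infsum b (I - F)" using eq by simp
qed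

lemma tail_small:
  fixes b :: "'i \<Rightarrow> real"
  assumes b: "b summable_on I" and e: "e > 0"
  shows "\<exists>F. finite F \<and> F \<subseteq> I \<and> infsum b (I - F) \<le> e"
proof -
  obtain F where F: "finite F" "F \<subseteq> I" "dist (sum b F) (infsum b I) \<le> e"
    using infsum_finite_approximation[OF b e] by auto
  have bsub: "b summable_on (I - F)" using summable_on_subset[OF b] by auto
  have "infsum b I = infsum b (F \<union> (I - F))" using F(2) by (simp add: Un_absorb1)
  also have "\<dots> = infsum b F + infsum b (I - F)"
    by (rule infsum_Un_disjoint) (use F(1) bsub in auto)
  finally have eq: "infsum b I = sum b F + infsum b (I - F)" using F(1) by simp
  have "\<bar>sum b F - infsum b I\<bar> \<le> e" using F(3) by (simp add: dist_real_def)
  then have "infsum b (I - F) \<le> e" using eq by linarith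
  then show ?thesis using F(1,2) by blast
qed

lemma single_le_infsum:
  fixes f :: "'i \<Rightarrow> real"
  assumes "f summable_on I" "\<And>i. i \<in> I \<Longrightarrow> 0 \<le> f i" "A \<in> I"
  shows "f A \<le> infsum f I"
proof -
  have "infsum f {A} \<le> infsum f I"
    by (rule infsum_mono_neutral) (use assms in auto)
  then show ?thesis by simp
qed

lemma exists_rigid_seq:
  fixes c :: "'i \<Rightarrow> complex" and w :: "'i \<Rightarrow> real"
  assumes w: "w summable_on I" and wpos: "\<And>A. A \<in> I \<Longrightarrow> w A > 0" and c1: "\<And>A. A \<in> I \<Longrightarrow> norm (c A) = 1"
  shows "\<exists>\<omega>. incseq_pos \<omega> \<and> (\<forall>A\<in>I. (\<lambda>n. c A ^ \<omega> n) \<longlonglongrightarrow> 1)"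
proof -
  define D where "D k = infsum (\<lambda>A. w A * norm (c A ^ k - 1)) I" for k
  have le2: "norm (c A ^ k - 1) \<le> 2" if "A \<in> I" for A k
  proof -
    have "norm (c A ^ k - 1) \<le> norm (c A ^ k) + norm (1::complex)" by (rule norm_triangle_ineq4)
    then show ?thesis using c1[OF that] by (simp add: norm_power)
  qed
  have w2: "(\<lambda>A. 2 * w A) summable_on I" using w by (rule summable_on_cmult_right)
  have bd: "0 \<le> w A * norm (c A ^ k - 1) \<and> w A * norm (c A ^ k - 1) \<le> 2 * w A" if "A \<in> I" for A k
  proof
    show "0 \<le> w A * norm (c A ^ k - 1)" using wpos[OF that] by simp
    have "w A * norm (c A ^ k - 1) \<le> w A * 2" using le2[OF that, of k] wpos[OF that] by (intro mult_left_mono) auto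
    then show "w A * norm (c A ^ k - 1) \<le> 2 * w A" by simp
  qed
  have small: "\<exists>k>K. D k < e" if e: "e > 0" for e K
  proof -
    obtain F where F: "finite F" "F \<subseteq> I" "infsum (\<lambda>A. 2 * w A) (I - F) \<le> e/2"
      using tail_small[OF w2, of "e/2"] e by auto
    have swnn: "sum w F \<ge> 0" using F wpos by (intro sum_nonneg) (auto intro: less_imp_le)
    define \<eta> where "\<eta> = e / (4 * (sum w F + 1))"
    have eta: "\<eta> > 0" unfolding \<eta>_def using swnn e by simp
    obtain k where k: "k > K" "\<forall>A\<in>F. norm (c A ^ k - 1) < \<eta>" using fsr[OF F(1) _ eta, of c K] c1 F(2) by blast
    have "D k \<le> (\<Sum>A\<in>F. w A * norm (c A ^ k - 1)) + infsum (\<lambda>A. 2 * w A) (I - F)"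
      unfolding D_def by (rule infsum_split_bound(1)[OF w2 bd F(1,2)])
    also have "(\<Sum>A\<in>F. w A * norm (c A ^ k - 1)) \<le> (\<Sum>A\<in>F. w A * \<eta>)"
      using k(2) F(2) wpos by (intro sum_mono mult_left_mono) (auto intro: less_imp_le)
    also have "(\<Sum>A\<in>F. w A * \<eta>) = sum w F * \<eta>" by (simp add: sum_distrib_right)
    also have "sum w F * \<eta> = (e/4) * (sum w F / (sum w F + 1))" unfolding \<eta>_def by simp
    also have "\<dots> \<le> (e/4) * 1" using swnn e by (intro mult_left_mono) auto
    finally have "D k \<le> e/4 + infsum (\<lambda>A. 2 * w A) (I - F)" by simp
    then have "D k < e" using F(3) e by linarith
    then show ?thesis using k(1) by blast
  qed
  define P where "P n k = (D k < inverse (real (Suc n)))" for n k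
  have "\<And>n K. \<exists>k>K. P n k" unfolding P_def by (rule small) simp
  then have pk: "incseq_pos (pickseq P) \<and> (\<forall>n. P n (pickseq P n))" by (rule pickseq)
  define \<omega> where "\<omega> = pickseq P"
  have om: "incseq_pos \<omega>" "\<And>n. D (\<omega> n) < inverse (real (Suc n))"
    using pk unfolding \<omega>_def P_def by auto
  have summ: "(\<lambda>A. w A * norm (c A ^ k - 1)) summable_on I" for k
    by (rule infsum_split_bound(2)[OF w2 bd, of "{}"]) auto
  have "(\<lambda>n. c A ^ \<omega> n) \<longlonglongrightarrow> 1" if A: "A \<in> I" for A
  proof -
    have le: "norm (c A ^ \<omega> n - 1) \<le> inverse (real (Suc n)) / w A" for n
    proof -
      have "w A * norm (c A ^ \<omega> n - 1) \<le> D (\<omega> n)" unfolding D_def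
        by (rule single_le_infsum[OF summ _ A]) (use bd in blast)
      then have "w A * norm (c A ^ \<omega> n - 1) \<le> inverse (real (Suc n))" using om(2)[of n] by linarith
      then show ?thesis using wpos[OF A] by (simp add: pos_le_divide_eq mult.commute)
    qed
    have "(\<lambda>n. inverse (real (Suc n)) / w A) \<longlonglongrightarrow> 0 / w A"
      by (intro tendsto_divide LIMSEQ_inverse_real_of_nat) (use wpos[OF A] in auto)
    then have "(\<lambda>n. c A ^ \<omega> n - 1) \<longlonglongrightarrow> 0"
      using Lim_null_comparison[of "\<lambda>n. c A ^ \<omega> n - 1" "\<lambda>n. inverse (real (Suc n)) / w A" sequentially] le
      by (simp add: always_eventually)
    then show ?thesis by (simp add: LIM_zero_iff)
  qed
  then show ?thesis using om(1) by blast
qed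



lemma pow_tendsto_one:
  fixes r :: real
  assumes r: "r \<ge> 0" and lim: "(\<lambda>n. r ^ \<omega> n) \<longlonglongrightarrow> 1" and pos: "\<And>n. \<omega> n \<ge> 1"
  shows "r = 1"
proof (rule ccontr)
  assume "r \<noteq> 1"
  then consider "r < 1" | "r > 1" by linarith
  then show False
  proof cases
    case 1
    have "r ^ \<omega> n \<le> r ^ 1" for n using power_decreasing[OF pos[of n] r] 1 by simp
    then have "1 \<le> r" using LIMSEQ_le_const2[OF lim] by simp
    then show False using 1 by simp
  next
    case 2
    have "r ^ 1 \<le> r ^ \<omega> n" for n using power_increasing[OF pos[of n], of r] 2 by simp
    then have "r \<le> 1" using LIMSEQ_le_const[OF lim] by simp
    then show False using 2 by simp
  qed
qed

lemma open_in_sphere_empty: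
  fixes S :: "complex set"
  assumes "open S" "S \<subseteq> sphere 0 1"
  shows "S = {}"
proof (rule ccontr)
  assume "S \<noteq> {}"
  then obtain w where w: "w \<in> S" by blast
  then have nw: "norm w = 1" using assms(2) by auto
  obtain e where e: "e > 0" "ball w e \<subseteq> S" using assms(1) w open_contains_ball by blast
  define w' where "w' = complex_of_real (1 + e/2) * w"
  have "dist w w' = e/2"
    unfolding w'_def dist_norm
  proof -
    have "w - complex_of_real (1 + e / 2) * w = - (complex_of_real (e/2) * w)" by (simp add: algebra_simps)
    then show "norm (w - complex_of_real (1 + e / 2) * w) = e/2" using nw e(1) by (simp add: norm_mult)
  qed
  then have "w' \<in> S" using e by auto
  moreover have "norm w' = 1 + e/2"
  proof -
    have "norm w' = norm (complex_of_real (1 + e/2)) * norm w" by (simp only: w'_def norm_mult)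
    moreover have "norm (complex_of_real (1 + e/2)) = 1 + e/2" by (subst norm_of_real) (use e(1) in simp)
    ultimately show ?thesis using nw by simp
  qed
  ultimately show False using assms(2) e(1) by auto
qed

context hb
begin

lemma iter_mult: "(mult_op \<phi> ^^ k) x = (\<lambda>z. \<phi> z ^ k * x z)"
  by (induction k) (auto simp: mult_op_def)

lemma iter_X: "(\<forall>f\<in>X. mult_op \<phi> f \<in> X) \<Longrightarrow> g \<in> X \<Longrightarrow> (mult_op \<phi> ^^ k) g \<in> X"
  by (induction k) auto

lemma K_lemma:
  assumes mX: "\<forall>f\<in>X. mult_op \<phi> f \<in> X"
    and cst: "\<And>A z. A \<in> components \<Omega> \<Longrightarrow> z \<in> A \<Longrightarrow> \<phi> z = c A"
    and c1: "\<And>A. A \<in> components \<Omega> \<Longrightarrow> norm (c A) = 1"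
    and conv: "\<And>A. A \<in> components \<Omega> \<Longrightarrow> (\<lambda>n. c A ^ \<omega> n) \<longlonglongrightarrow> 1"
    and g: "g \<in> X"
  shows "nconv N (\<lambda>n. (mult_op \<phi> ^^ \<omega> n) g) g"
proof -
  define h where "h k = (\<lambda>z. \<phi> z ^ k * g z - g z)" for k
  have hX: "h k \<in> X" for k
  proof -
    have "(\<lambda>z. (mult_op \<phi> ^^ k) g z - g z) \<in> X" using X_diff[OF iter_X[OF mX g] g] .
    then show ?thesis unfolding h_def iter_mult .
  qed
  have chih: "chi A (h k) = (\<lambda>z. (c A ^ k - 1) * chi A g z)" if A: "A \<in> components \<Omega>" for A k
  proof
    fix z show "chi A (h k) z = (c A ^ k - 1) * chi A g z"
      using cst[OF A, of z] unfolding h_def by (simp add: algebra_simps)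
  qed
  have Nchi: "N (chi A (h k)) = norm (c A ^ k - 1) * N (chi A g)" if A: "A \<in> components \<Omega>" for A k
    unfolding chih[OF A] by (rule N_scale[OF chi_X[OF g A]])
  have le2: "norm (c A ^ k - 1) \<le> 2" if "A \<in> components \<Omega>" for A k
  proof -
    have "norm (c A ^ k - 1) \<le> norm (c A ^ k) + norm (1::complex)" by (rule norm_triangle_ineq4)
    then show ?thesis using c1[OF that] by (simp add: norm_power)
  qed
  define a where "a n A = norm (c A ^ \<omega> n - 1) * N (chi A g)" for n A
  have Nh: "N (h (\<omega> n)) \<le> infsum (a n) (components \<Omega>)" for n
  proof -
    have "N (h (\<omega> n)) \<le> infsum (\<lambda>A. N (chi A (h (\<omega> n)))) (components \<Omega>)" by (rule N_le_infsum[OF hX])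
    also have "\<dots> = infsum (a n) (components \<Omega>)" unfolding a_def by (rule infsum_cong) (rule Nchi)
    finally show ?thesis .
  qed
  have b: "(\<lambda>A. 2 * N (chi A g)) summable_on components \<Omega>"
    using chi_summable[OF g] by (rule summable_on_cmult_right)
  have bd: "0 \<le> a n A \<and> a n A \<le> 2 * N (chi A g)" if A: "A \<in> components \<Omega>" for n A
  proof
    have nn: "N (chi A g) \<ge> 0" using N_nonneg[OF chi_X[OF g A]] .
    show "0 \<le> a n A" unfolding a_def using nn by simp
    show "a n A \<le> 2 * N (chi A g)" unfolding a_def using mult_right_mono[OF le2[OF A] nn] by simp
  qed
  have lim: "(\<lambda>n. a n A) \<longlonglongrightarrow> 0" if A: "A \<in> components \<Omega>" for A
  proof -
    have "(\<lambda>n. c A ^ \<omega> n - 1) \<longlonglongrightarrow> 1 - 1" using conv[OF A] by (intro tendsto_diff) auto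
    then have "(\<lambda>n. norm (c A ^ \<omega> n - 1)) \<longlonglongrightarrow> norm (1 - 1 :: complex)" by (rule tendsto_norm)
    then have "(\<lambda>n. norm (c A ^ \<omega> n - 1) * N (chi A g)) \<longlonglongrightarrow> 0 * N (chi A g)"
      by (intro tendsto_mult) auto
    then show ?thesis unfolding a_def by simp
  qed
  have sl: "(\<lambda>n. infsum (a n) (components \<Omega>)) \<longlonglongrightarrow> 0" by (rule infsum_dct[OF b bd lim])
  have "(\<lambda>n. N (h (\<omega> n))) \<longlonglongrightarrow> 0"
  proof (rule tendsto_sandwich[of "\<lambda>n. 0" _ _ "\<lambda>n. infsum (a n) (components \<Omega>)"])
    show "eventually (\<lambda>n. 0 \<le> N (h (\<omega> n))) sequentially" using N_nonneg[OF hX] by simp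
    show "eventually (\<lambda>n. N (h (\<omega> n)) \<le> infsum (a n) (components \<Omega>)) sequentially" using Nh by simp
  qed (use sl in auto)
  then show ?thesis unfolding nconv_def iter_mult h_def .
qed

end

locale hbm = hb +
  fixes \<phi> :: "complex \<Rightarrow> complex"
  assumes ne: "\<Omega> \<noteq> {}"
    and nontriv: "\<exists>f\<in>X. f \<noteq> (\<lambda>z. 0)"
    and oneX: "(\<lambda>z. if z \<in> \<Omega> then 1 else 0) \<in> X"
    and holo: "\<phi> holomorphic_on \<Omega>"
    and mX: "\<forall>f\<in>X. mult_op \<phi> f \<in> X"
begin

abbreviation "T \<equiv> mult_op \<phi>"
abbreviation "one \<equiv> (\<lambda>z::complex. if z \<in> \<Omega> then 1 else (0::complex))"
abbreviation "P3 \<equiv> (\<forall>A\<in>components \<Omega>. \<exists>c. \<forall>z\<in>A. \<phi> z = c) \<and> (\<forall>z\<in>\<Omega>. norm (\<phi> z) = 1)"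

lemma dense_self: "ndense X N X"
proof -
  have "\<forall>x\<in>X. \<forall>e>0. N (\<lambda>z. x z - x z) < e" using N_zero by simp
  then show ?thesis unfolding ndense_def by blast
qed

lemma rec_pointwise:
  assumes y: "y \<in> X" and om: "incseq_pos \<omega>" and c: "nconv N (\<lambda>n. (T ^^ \<omega> n) y) y" and z: "z \<in> \<Omega>"
    and yz: "y z \<noteq> 0"
  shows "(\<lambda>n. \<phi> z ^ \<omega> n) \<longlonglongrightarrow> 1"
proof -
  have "(\<lambda>n. (T ^^ \<omega> n) y z) \<longlonglongrightarrow> y z"
    by (rule pe_conv[OF iter_X[OF mX y] y c z])
  then have "(\<lambda>n. \<phi> z ^ \<omega> n * y z) \<longlonglongrightarrow> y z" unfolding iter_mult .
  then have "(\<lambda>n. \<phi> z ^ \<omega> n * y z / y z) \<longlonglongrightarrow> y z / y z" by (rule tendsto_divide) (use yz in auto)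
  then show ?thesis using yz by simp
qed

lemma rec_imp_P3:
  assumes R: "recurrent_op X N T"
  shows P3
proof -
  have n1: "norm (\<phi> z0) = 1" if z0: "z0 \<in> \<Omega>" for z0
  proof -
    obtain C where C: "C > 0" "\<forall>f\<in>X. norm (f z0) \<le> C * N f" using pe z0 by blast
    have "ndense X N (Rec_set X N T)" using R unfolding recurrent_op_def .
    then have D: "\<forall>x\<in>X. \<forall>e>0. \<exists>y\<in>Rec_set X N T. N (\<lambda>z. x z - y z) < e" unfolding ndense_def by blast
    have "\<exists>y\<in>Rec_set X N T. N (\<lambda>z. one z - y z) < 1 / C" using D[rule_format, OF oneX, of "1/C"] C(1) by simp
    then obtain y where y: "y \<in> Rec_set X N T" "N (\<lambda>z. one z - y z) < 1 / C" by blast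
    have yX: "y \<in> X" using y(1) unfolding Rec_set_def by simp
    obtain \<omega> where om: "incseq_pos \<omega>" "nconv N (\<lambda>n. (T ^^ \<omega> n) y) y"
      using y(1) unfolding Rec_set_def by blast
    have "norm (one z0 - y z0) \<le> C * N (\<lambda>z. one z - y z)"
      using C(2) X_diff[OF oneX yX] by fastforce
    also have "\<dots> < C * (1 / C)" using y(2) C(1) by (intro mult_strict_left_mono) auto
    finally have "norm (1 - y z0) < 1" using z0 C(1) by simp
    then have yz: "y z0 \<noteq> 0" by auto
    have "(\<lambda>n. \<phi> z0 ^ \<omega> n) \<longlonglongrightarrow> 1" by (rule rec_pointwise[OF yX om z0 yz])
    then have "(\<lambda>n. norm (\<phi> z0 ^ \<omega> n)) \<longlonglongrightarrow> norm (1::complex)" by (rule tendsto_norm)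
    then have "(\<lambda>n. norm (\<phi> z0) ^ \<omega> n) \<longlonglongrightarrow> 1" by (simp add: norm_power)
    moreover have "\<omega> n \<ge> 1" for n using om(1) unfolding incseq_pos_def by (simp add: Suc_le_eq)
    ultimately show ?thesis by (intro pow_tendsto_one) auto
  qed
  have cst: "\<exists>c. \<forall>z\<in>A. \<phi> z = c" if A: "A \<in> components \<Omega>" for A
  proof (rule ccontr)
    assume nc: "\<nexists>c. \<forall>z\<in>A. \<phi> z = c"
    have Aopen: "open A" using open_components[OF opn A] .
    have Aconn: "connected A" using in_components_connected[OF A] .
    have AO: "A \<subseteq> \<Omega>" using in_components_subset[OF A] .
    have hA: "\<phi> holomorphic_on A" using holomorphic_on_subset[OF holo AO] .
    have "\<not> \<phi> constant_on A" using nc unfolding constant_on_def by blast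
    then have "open (\<phi> ` A)" using open_mapping_thm[OF hA Aopen Aconn Aopen order_refl] by blast
    moreover have "\<phi> ` A \<subseteq> sphere 0 1" using n1 AO by auto
    ultimately have "\<phi> ` A = {}" by (rule open_in_sphere_empty)
    then show False using in_components_nonempty[OF A] by simp
  qed
  show ?thesis using n1 cst by blast
qed

lemma P3_seq:
  assumes P: P3
  shows "\<exists>\<omega>. incseq_pos \<omega> \<and> (\<forall>g\<in>X. nconv N (\<lambda>n. (T ^^ \<omega> n) g) g)"
proof -
  define c where "c A = \<phi> (SOME z. z \<in> A)" for A
  have cst: "\<phi> z = c A" if A: "A \<in> components \<Omega>" and z: "z \<in> A" for A z
  proof -
    obtain d where d: "\<forall>z\<in>A. \<phi> z = d" using P A by blast
    have "(SOME z. z \<in> A) \<in> A" using z by (rule someI)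
    then show ?thesis using d z unfolding c_def by simp
  qed
  have c1: "norm (c A) = 1" if A: "A \<in> components \<Omega>" for A
  proof -
    obtain z where z: "z \<in> A" using in_components_nonempty[OF A] by blast
    then have "z \<in> \<Omega>" using in_components_subset[OF A] by blast
    then have "norm (\<phi> z) = 1" using P by blast
    then show ?thesis using cst[OF A z] by simp
  qed
  define w where "w A = N (chi A one)" for A
  have ws: "w summable_on components \<Omega>" unfolding w_def using chi_summable[OF oneX] .
  have wpos: "w A > 0" if A: "A \<in> components \<Omega>" for A
  proof -
    obtain z where z: "z \<in> A" using in_components_nonempty[OF A] by blast
    then have zO: "z \<in> \<Omega>" using in_components_subset[OF A] by blast
    have ne0: "chi A one \<noteq> (\<lambda>z. 0)"
    proof
      assume "chi A one = (\<lambda>z. 0)"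
      from fun_cong[OF this, of z] z zO show False by simp
    qed
    have cX: "chi A one \<in> X" using chi_X[OF oneX A] .
    show ?thesis unfolding w_def using N_nonneg[OF cX] N_eq0[OF cX] ne0 by linarith
  qed
  have "\<exists>\<omega>. incseq_pos \<omega> \<and> (\<forall>A\<in>components \<Omega>. (\<lambda>n. c A ^ \<omega> n) \<longlonglongrightarrow> 1)"
    by (rule exists_rigid_seq[OF ws]) (auto intro: wpos c1)
  then obtain \<omega> where om: "incseq_pos \<omega>" "\<forall>A\<in>components \<Omega>. (\<lambda>n. c A ^ \<omega> n) \<longlonglongrightarrow> 1"
    by blast
  have "nconv N (\<lambda>n. (T ^^ \<omega> n) g) g" if g: "g \<in> X" for g
    by (rule K_lemma[OF mX cst c1 _ g]) (use om(2) in auto)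
  then show ?thesis using om(1) by blast
qed

lemma P3_imp_rigid: assumes P3 shows "rigid_op X N T"
proof -
  obtain \<omega> where om: "incseq_pos \<omega>" "\<forall>g\<in>X. nconv N (\<lambda>n. (T ^^ \<omega> n) g) g"
    using P3_seq[OF assms] by blast
  have L: "Lset X N T \<omega> = X" unfolding Lset_def using om(2) by auto
  have "\<omega> \<in> Cset X N T" unfolding Cset_def using om(1) L nontriv by auto
  then show ?thesis unfolding rigid_op_def using L by blast
qed

lemma rigid_imp_rec: assumes "rigid_op X N T" shows "recurrent_op X N T"
proof -
  obtain \<omega> where om: "\<omega> \<in> Cset X N T" "Lset X N T \<omega> = X" using assms unfolding rigid_op_def by blast
  have "incseq_pos \<omega>" using om(1) unfolding Cset_def by simp
  then have "X \<subseteq> Rec_set X N T" using om(2) unfolding Rec_set_def Lset_def by blast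
  moreover have "Rec_set X N T \<subseteq> X" unfolding Rec_set_def by auto
  ultimately have "Rec_set X N T = X" by blast
  then show ?thesis unfolding recurrent_op_def using dense_self by simp
qed


lemma P3_c:
  assumes P: P3
  obtains c where "\<And>A z. A \<in> components \<Omega> \<Longrightarrow> z \<in> A \<Longrightarrow> \<phi> z = c A"
    "\<And>A. A \<in> components \<Omega> \<Longrightarrow> norm (c A) = 1"
proof -
  define c where "c A = \<phi> (SOME z. z \<in> A)" for A
  have cst: "\<phi> z = c A" if A: "A \<in> components \<Omega>" and z: "z \<in> A" for A z
  proof -
    obtain d where d: "\<forall>z\<in>A. \<phi> z = d" using P A by blast
    have "(SOME z. z \<in> A) \<in> A" using z by (rule someI)
    then show ?thesis using d z unfolding c_def by simp
  qed
  have c1: "norm (c A) = 1" if A: "A \<in> components \<Omega>" for A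
  proof -
    obtain z where z: "z \<in> A" using in_components_nonempty[OF A] by blast
    then have "z \<in> \<Omega>" using in_components_subset[OF A] by blast
    then have "norm (\<phi> z) = 1" using P by blast
    then show ?thesis using cst[OF A z] by simp
  qed
  show ?thesis using that cst c1 by blast
qed

lemma comp_countable: "countable (components \<Omega>)"
proof -
  define w where "w A = N (chi A one)" for A
  have ws: "w summable_on components \<Omega>" unfolding w_def using chi_summable[OF oneX] .
  have wpos: "w A \<noteq> 0" if A: "A \<in> components \<Omega>" for A
  proof -
    obtain z where z: "z \<in> A" using in_components_nonempty[OF A] by blast
    then have zO: "z \<in> \<Omega>" using in_components_subset[OF A] by blast
    have ne0: "chi A one \<noteq> (\<lambda>z. 0)"
    proof
      assume "chi A one = (\<lambda>z. 0)"
      from fun_cong[OF this, of z] z zO show False by simp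
    qed
    have cX: "chi A one \<in> X" using chi_X[OF oneX A] .
    show ?thesis unfolding w_def using N_eq0[OF cX] ne0 by simp
  qed
  have "countable {A\<in>components \<Omega>. w A \<noteq> 0}" by (rule summable_countable_real[OF ws])
  moreover have "{A\<in>components \<Omega>. w A \<noteq> 0} = components \<Omega>" using wpos by auto
  ultimately show ?thesis by simp
qed

lemma nonzero_in_Hr:
  assumes P: P3 and x: "x \<in> X" and nz: "\<And>A. A \<in> components \<Omega> \<Longrightarrow> \<exists>z\<in>A. x z \<noteq> 0"
  shows "x \<in> Hr_set X N T"
proof -
  obtain c where cst: "\<And>A z. A \<in> components \<Omega> \<Longrightarrow> z \<in> A \<Longrightarrow> \<phi> z = c A"
    and c1: "\<And>A. A \<in> components \<Omega> \<Longrightarrow> norm (c A) = 1" using P3_c[OF P] by blast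
  obtain \<omega>0 where om0: "incseq_pos \<omega>0" "\<forall>g\<in>X. nconv N (\<lambda>n. (T ^^ \<omega>0 n) g) g"
    using P3_seq[OF P] by blast
  have xR: "x \<in> Rec_set X N T" unfolding Rec_set_def using x om0 by blast
  have "ndense X N (Lset X N T \<omega>)" if om: "\<omega> \<in> Cset X N T" and xL: "x \<in> Lset X N T \<omega>" for \<omega>
  proof -
    have ip: "incseq_pos \<omega>" using om unfolding Cset_def by simp
    have xc: "nconv N (\<lambda>n. (T ^^ \<omega> n) x) x" using xL unfolding Lset_def by simp
    have conv: "(\<lambda>n. c A ^ \<omega> n) \<longlonglongrightarrow> 1" if A: "A \<in> components \<Omega>" for A
    proof -
      obtain z where z: "z \<in> A" "x z \<noteq> 0" using nz[OF A] by blast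
      have zO: "z \<in> \<Omega>" using in_components_subset[OF A] z(1) by blast
      have "(\<lambda>n. \<phi> z ^ \<omega> n) \<longlonglongrightarrow> 1" by (rule rec_pointwise[OF x ip xc zO z(2)])
      then show ?thesis using cst[OF A z(1)] by simp
    qed
    have "nconv N (\<lambda>n. (T ^^ \<omega> n) g) g" if g: "g \<in> X" for g
      by (rule K_lemma[OF mX cst c1 conv g])
    then have "Lset X N T \<omega> = X" unfolding Lset_def by auto
    then show ?thesis using dense_self by simp
  qed
  then show ?thesis unfolding Hr_set_def using xR by blast
qed

lemma P3_Hr_dense:
  assumes P: P3
  shows "ndense X N (Hr_set X N T)"
proof -
  have sub: "Hr_set X N T \<subseteq> X" unfolding Hr_set_def Rec_set_def by auto
  have "\<exists>x\<in>Hr_set X N T. N (\<lambda>z. y z - x z) < e" if y: "y \<in> X" and e: "e > 0" for y e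
  proof -
    define n1 where "n1 = N one"
    have n1: "n1 \<ge> 0" unfolding n1_def using N_nonneg[OF oneX] .
    define \<delta> where "\<delta> = e / (n1 + 1)"
    have \<delta>: "\<delta> > 0" unfolding \<delta>_def using e n1 by simp
    define Bad where "Bad = (\<lambda>A. Re (- y (SOME z. z \<in> A))) ` components \<Omega>"
    have cB: "countable Bad" unfolding Bad_def using comp_countable by simp
    have "uncountable {0<..<\<delta>}" using \<delta> by (simp add: uncountable_open_interval)
    then have "\<not> {0<..<\<delta>} \<subseteq> Bad" using cB countable_subset by blast
    then obtain t where t: "t \<in> {0<..<\<delta>}" "t \<notin> Bad" by blast
    define x where "x = (\<lambda>z. y z + (\<lambda>z. complex_of_real t * one z) z)"
    have xX: "x \<in> X" unfolding x_def by (rule X_add[OF y X_scale[OF oneX]])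
    have nz: "\<exists>z\<in>A. x z \<noteq> 0" if A: "A \<in> components \<Omega>" for A
    proof -
      define a where "a = (SOME z. z \<in> A)"
      obtain z0 where "z0 \<in> A" using in_components_nonempty[OF A] by blast
      then have aA: "a \<in> A" unfolding a_def by (rule someI)
      have aO: "a \<in> \<Omega>" using in_components_subset[OF A] aA by blast
      have "x a \<noteq> 0"
      proof
        assume "x a = 0"
        then have "y a + complex_of_real t = 0" unfolding x_def using aO by simp
        then have "complex_of_real t = - y a" by (simp add: eq_neg_iff_add_eq_0 add.commute)
        then have "t = Re (- y a)" by (metis Re_complex_of_real)
        then have "t \<in> Bad" unfolding Bad_def a_def using A by blast
        then show False using t(2) by blast
      qed
      then show ?thesis using aA by blast
    qed
    have xH: "x \<in> Hr_set X N T" by (rule nonzero_in_Hr[OF P xX nz])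
    have "(\<lambda>z. y z - x z) = (\<lambda>z. complex_of_real (- t) * one z)" unfolding x_def by auto
    then have "N (\<lambda>z. y z - x z) = N (\<lambda>z. complex_of_real (- t) * one z)" by (simp only:)
    also have "\<dots> = norm (complex_of_real (- t)) * n1" unfolding n1_def by (rule N_scale[OF oneX])
    also have "\<dots> = t * n1" using t(1) by simp
    also have "\<dots> \<le> t * (n1 + 1)" using t(1) by simp
    also have "\<dots> < \<delta> * (n1 + 1)" using t(1) n1 by (intro mult_strict_right_mono) auto
    also have "\<dots> = e" unfolding \<delta>_def using n1 by simp
    finally show ?thesis using xH by blast
  qed
  then show ?thesis unfolding ndense_def using sub by blast
qed

lemma Hr_dense_imp_hyper:
  assumes H: "ndense X N (Hr_set X N T)"
  shows "hyper_recurrent_op X N T"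
proof -
  have sub: "Hr_set X N T \<subseteq> Rec_set X N T" unfolding Hr_set_def by auto
  have D: "\<forall>x\<in>X. \<forall>e>0. \<exists>y\<in>Hr_set X N T. N (\<lambda>z. x z - y z) < e" using H unfolding ndense_def by blast
  have "\<forall>x\<in>X. \<forall>e>0. \<exists>y\<in>Rec_set X N T. N (\<lambda>z. x z - y z) < e" using D sub by blast
  moreover have "Rec_set X N T \<subseteq> X" unfolding Rec_set_def by auto
  ultimately have R: "recurrent_op X N T" unfolding recurrent_op_def ndense_def by blast
  have "\<exists>y\<in>Hr_set X N T. N (\<lambda>z. one z - y z) < 1" using D oneX by simp
  then have "Hr_set X N T \<noteq> {}" by blast
  then show ?thesis unfolding hyper_recurrent_op_def using R by blast
qed

end

theorem theorem5p8:
  fixes \<Omega> :: "complex set" and X :: "(complex \<Rightarrow> complex) set"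
    and N :: "(complex \<Rightarrow> complex) \<Rightarrow> real" and \<phi> :: "complex \<Rightarrow> complex"
  assumes "open \<Omega>" and "\<Omega> \<noteq> {}"
    and "holo_banach_space \<Omega> X N"
    and "\<exists>f\<in>X. f \<noteq> (\<lambda>z. 0)"
    and "(\<lambda>z. if z \<in> \<Omega> then 1 else 0) \<in> X"
    and "\<forall>z\<in>\<Omega>. \<exists>C>0. \<forall>f\<in>X. norm (f z) \<le> C * N f"
    and "\<forall>g\<in>X. (\<forall>A\<in>components \<Omega>. (\<lambda>z. if z \<in> A then g z else 0) \<in> X) \<and>
                (\<lambda>A. N (\<lambda>z. if z \<in> A then g z else 0)) summable_on components \<Omega>"
    and "\<phi> holomorphic_on \<Omega>"
    and "\<forall>f\<in>X. mult_op \<phi> f \<in> X"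
    and "\<exists>C. \<forall>f\<in>X. N (mult_op \<phi> f) \<le> C * N f"
  shows "(recurrent_op X N (mult_op \<phi>) \<longleftrightarrow> rigid_op X N (mult_op \<phi>)) \<and>
         (rigid_op X N (mult_op \<phi>) \<longleftrightarrow>
            ((\<forall>A\<in>components \<Omega>. \<exists>c. \<forall>z\<in>A. \<phi> z = c) \<and> (\<forall>z\<in>\<Omega>. norm (\<phi> z) = 1))) \<and>
         (((\<forall>A\<in>components \<Omega>. \<exists>c. \<forall>z\<in>A. \<phi> z = c) \<and> (\<forall>z\<in>\<Omega>. norm (\<phi> z) = 1)) \<longleftrightarrow>
            hyper_recurrent_op X N (mult_op \<phi>)) \<and>
         (hyper_recurrent_op X N (mult_op \<phi>) \<longleftrightarrow> ndense X N (Hr_set X N (mult_op \<phi>)))"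
  proof -
  interpret hbm \<Omega> X N \<phi>
    by (unfold_locales) (use assms in auto)
  have a: "recurrent_op X N (mult_op \<phi>) \<Longrightarrow> P3" by (rule rec_imp_P3)
  have b: "P3 \<Longrightarrow> rigid_op X N (mult_op \<phi>)" by (rule P3_imp_rigid)
  have c: "rigid_op X N (mult_op \<phi>) \<Longrightarrow> recurrent_op X N (mult_op \<phi>)" by (rule rigid_imp_rec)
  have d: "P3 \<Longrightarrow> ndense X N (Hr_set X N (mult_op \<phi>))" by (rule P3_Hr_dense)
  have e: "ndense X N (Hr_set X N (mult_op \<phi>)) \<Longrightarrow> hyper_recurrent_op X N (mult_op \<phi>)" by (rule Hr_dense_imp_hyper)
  have f: "hyper_recurrent_op X N (mult_op \<phi>) \<Longrightarrow> recurrent_op X N (mult_op \<phi>)"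
    unfolding hyper_recurrent_op_def by simp
  show ?thesis using a b c d e f by blast
qed

end
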